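(* If $n_1<n_2<n_3\neq N/2$, then the geometric realization of $C(n_1,n_2,n_3)$ is homeomorphic to a disjoint union of tori (one for each of its $\gcd(n_1,n_2,n_3)$ components).
   Context: Standing conventions: $N,n_1,n_2,n_3$ are positive integers with $n_1+n_2+n_3=N$ and $1\le n_1\le n_2\le n_3<N$. $C(n_1,n_2,n_3)$ denotes the abstract simplicial complex whose vertex set is $\mathbb{Z}/N$, whose 2-simplices are all sets of the form $\{k,k+n_1,k+n_1+n_2\}$ or $\{k,k-n_1,k-n_1-n_2\}$ for $k\in\mathbb{Z}/N$ (i.e. the orbit of $\{0,n_1,n_1+n_2\}$ under all translations $x\mapsto x+t$ and inversions $x\mapsto t-x$ of $\mathbb{Z}/N$), and whose 1-simplices are all sets $\{k,k+n_i\}$ with $k\in\mathbb{Z}/N$, $i\in\{1,2,3\}$. *)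

theory Defs
  imports "HOL-Analysis.Analysis"
begin

text \<open>The complex C(n1,n2,n3): vertex set Z/N is represented by {0..<N} (nat, arithmetic mod N).
  Its simplices (as vertex sets) are the 2-simplices, the 1-simplices and the vertices.\<close>

definition cyc_triangles :: "nat \<Rightarrow> nat \<Rightarrow> nat \<Rightarrow> nat set set" where
  "cyc_triangles n1 n2 n3 = (let N = n1 + n2 + n3 in
     {{k mod N, (k + n1) mod N, (k + n1 + n2) mod N} | k. k < N} \<union>
     {{k mod N, (k + N - n1) mod N, (k + 2 * N - n1 - n2) mod N} | k. k < N})"

definition cyc_edges :: "nat \<Rightarrow> nat \<Rightarrow> nat \<Rightarrow> nat set set" where
  "cyc_edges n1 n2 n3 = (let N = n1 + n2 + n3 in
     {{k mod N, (k + n) mod N} | k n. k < N \<and> n \<in> {n1, n2, n3}})"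

definition cyc_complex :: "nat \<Rightarrow> nat \<Rightarrow> nat \<Rightarrow> nat set set" where
  "cyc_complex n1 n2 n3 = cyc_triangles n1 n2 n3 \<union> cyc_edges n1 n2 n3 \<union>
     {{k} | k. k < n1 + n2 + n3}"

text \<open>Geometric realization of an abstract simplicial complex K with (finite) simplices
  made of natural-number vertices: vertex v is the v-th standard basis vector of the
  space nat => real (product topology); the realization is the union of the convex hulls
  of the simplices, written in barycentric coordinates.\<close>

definition geom_real :: "nat set set \<Rightarrow> (nat \<Rightarrow> real) set" where
  "geom_real K = {x. \<exists>\<sigma>\<in>K. (\<forall>i. 0 \<le> x i) \<and> (\<forall>i. i \<notin> \<sigma> \<longrightarrow> x i = 0) \<and> (\<Sum>i\<in>\<sigma>. x i) = 1}"

end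

theory Submission
  imports Defs "HOL-Analysis.Analysis"
begin

definition hat :: "int \<times> int \<Rightarrow> real \<times> real \<Rightarrow> real" where
"hat z P = max 0 (1 - max \<bar>fst P - of_int (fst z)\<bar> (max \<bar>snd P - of_int (snd z)\<bar> \<bar>(fst P - of_int (fst z)) - (snd P - of_int (snd z))\<bar>))"

lemma int_cases4: fixes i :: int obtains "i \<le> -1" | "i = 0" | "i = 1" | "i \<ge> 2" by linarith

lemma hatU_aux:
  assumes "0\<le>t" "t\<le>s" "s\<le>1"
  shows "max 0 (1 - max \<bar>s - of_int i\<bar> (max \<bar>t - of_int j\<bar> \<bar>(s - of_int i) - (t - of_int j)\<bar>)) =
    (if i=0\<and>j=0 then 1-s else if i=1\<and>j=0 then s-t else if i=1\<and>j=1 then t else (0::real))"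
proof -
  have A: "real_of_int i \<le> -1 \<or> i = 0 \<or> i = 1 \<or> real_of_int i \<ge> 2" by (cases i rule: int_cases4) auto
  have B: "real_of_int j \<le> -1 \<or> j = 0 \<or> j = 1 \<or> real_of_int j \<ge> 2" by (cases j rule: int_cases4) auto
  from A B assms show ?thesis by (elim disjE) (auto simp: abs_if max_def)
qed

lemma hatD_aux:
  assumes "0\<le>s" "s\<le>t" "t\<le>1"
  shows "max 0 (1 - max \<bar>s - of_int i\<bar> (max \<bar>t - of_int j\<bar> \<bar>(s - of_int i) - (t - of_int j)\<bar>)) =
    (if i=0\<and>j=0 then 1-t else if i=0\<and>j=1 then t-s else if i=1\<and>j=1 then s else (0::real))"
proof -
  have A: "real_of_int i \<le> -1 \<or> i = 0 \<or> i = 1 \<or> real_of_int i \<ge> 2" by (cases i rule: int_cases4) auto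
  have B: "real_of_int j \<le> -1 \<or> j = 0 \<or> j = 1 \<or> real_of_int j \<ge> 2" by (cases j rule: int_cases4) auto
  from A B assms show ?thesis by (elim disjE) (auto simp: abs_if max_def)
qed


definition rp :: "int \<times> int \<Rightarrow> real \<times> real" where
  "rp w = (of_int (fst w), of_int (snd w))"

lemma hat_U:
  assumes "0\<le>t" "t\<le>s" "s\<le>1"
  shows "hat z (rp w + (s,t)) = (if z = w then 1-s else if z = w + (1,0) then s-t
            else if z = w + (1,1) then t else 0)"
proof -
  have "\<exists>i j. z = w + (i,j)" by (rule exI[of _ "fst z - fst w"], rule exI[of _ "snd z - snd w"]) (cases z, cases w, auto)
  then obtain i j where z: "z = w + (i,j)" by blast
  have e1: "(w + (i,j) = w) = (i=0 \<and> j=0)" by (cases w) auto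
  have e2: "(w + (i,j) = w + (1,0)) = (i=1 \<and> j=0)" by (cases w) auto
  have e3: "(w + (i,j) = w + (1,1)) = (i=1 \<and> j=1)" by (cases w) auto
  have "hat z (rp w + (s,t)) = max 0 (1 - max \<bar>s - of_int i\<bar> (max \<bar>t - of_int j\<bar> \<bar>(s - of_int i) - (t - of_int j)\<bar>))"
    unfolding hat_def z rp_def by (cases w) (simp add: algebra_simps)
  also have "\<dots> = (if i=0\<and>j=0 then 1-s else if i=1\<and>j=0 then s-t else if i=1\<and>j=1 then t else (0::real))"
    by (rule hatU_aux[OF assms])
  finally show ?thesis unfolding z e1 e2 e3 .
qed

lemma hat_D:
  assumes "0\<le>s" "s\<le>t" "t\<le>1"
  shows "hat z (rp w + (s,t)) = (if z = w then 1-t else if z = w + (0,1) then t-s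
            else if z = w + (1,1) then s else 0)"
proof -
  have "\<exists>i j. z = w + (i,j)" by (rule exI[of _ "fst z - fst w"], rule exI[of _ "snd z - snd w"]) (cases z, cases w, auto)
  then obtain i j where z: "z = w + (i,j)" by blast
  have e1: "(w + (i,j) = w) = (i=0 \<and> j=0)" by (cases w) auto
  have e2: "(w + (i,j) = w + (0,1)) = (i=0 \<and> j=1)" by (cases w) auto
  have e3: "(w + (i,j) = w + (1,1)) = (i=1 \<and> j=1)" by (cases w) auto
  have "hat z (rp w + (s,t)) = max 0 (1 - max \<bar>s - of_int i\<bar> (max \<bar>t - of_int j\<bar> \<bar>(s - of_int i) - (t - of_int j)\<bar>))"
    unfolding hat_def z rp_def by (cases w) (simp add: algebra_simps)
  also have "\<dots> = (if i=0\<and>j=0 then 1-t else if i=0\<and>j=1 then t-s else if i=1\<and>j=1 then s else (0::real))"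
    by (rule hatD_aux[OF assms])
  finally show ?thesis unfolding z e1 e2 e3 .
qed

lemma hat_nonneg: "hat z P \<ge> 0" unfolding hat_def by simp

definition cell :: "real \<times> real \<Rightarrow> (int \<times> int) set" where
  "cell P = {\<lfloor>fst P\<rfloor>..\<lfloor>fst P\<rfloor>+1} \<times> {\<lfloor>snd P\<rfloor>..\<lfloor>snd P\<rfloor>+1}"

lemma floor_near: fixes x :: real and a :: int
  assumes "\<bar>x - of_int a\<bar> < 1" shows "a \<in> {\<lfloor>x\<rfloor>..\<lfloor>x\<rfloor>+1}"
proof -
  have "of_int \<lfloor>x\<rfloor> \<le> x" "x < of_int \<lfloor>x\<rfloor> + 1" by linarith+
  with assms have "of_int \<lfloor>x\<rfloor> - 1 < real_of_int a" "real_of_int a < of_int \<lfloor>x\<rfloor> + 2" by linarith+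
  hence "\<lfloor>x\<rfloor> - 1 < a" "a < \<lfloor>x\<rfloor> + 2" by linarith+
  thus ?thesis by auto
qed

lemma hat_supp: "hat z P \<noteq> 0 \<Longrightarrow> z \<in> cell P"
proof -
  assume "hat z P \<noteq> 0"
  hence "\<bar>fst P - of_int (fst z)\<bar> < 1" "\<bar>snd P - of_int (snd z)\<bar> < 1"
    unfolding hat_def by (auto simp: max_def split: if_splits)
  thus ?thesis unfolding cell_def using floor_near by (cases z) auto
qed

lemma finite_cell: "finite (cell P)" unfolding cell_def by simp

lemma rp_add: "rp (a + b) = rp a + rp b" unfolding rp_def by (cases a, cases b) auto
lemma rp_diff: "rp (a - b) = rp a - rp b" unfolding rp_def by (cases a, cases b) auto

lemma hat_shift: "hat (z + l) (P + rp l) = hat z P"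
  unfolding hat_def rp_def by (cases z, cases l, cases P) (simp add: algebra_simps)

lemma floor_decomp: "\<exists>w s t. P = rp w + (s,t) \<and> 0 \<le> s \<and> s < 1 \<and> 0 \<le> t \<and> t < 1"
proof -
  obtain x y where P: "P = (x,y)" by (cases P)
  show ?thesis
    apply (rule exI[of _ "(\<lfloor>x\<rfloor>, \<lfloor>y\<rfloor>)"], rule exI[of _ "x - of_int \<lfloor>x\<rfloor>"], rule exI[of _ "y - of_int \<lfloor>y\<rfloor>"])
    unfolding P rp_def by auto linarith+
qed


locale cyc =
  fixes n1 n2 n3 N :: nat
  assumes NN: "N = n1 + n2 + n3" and n1: "1 \<le> n1" and n12: "n1 < n2" and n23: "n2 < n3"
    and half: "2*n3 \<noteq> N"
begin

definition phi :: "int \<times> int \<Rightarrow> int" where "phi z = fst z * int n1 + snd z * int n2"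
definition lab :: "nat \<Rightarrow> int \<times> int \<Rightarrow> nat" where "lab c z = nat ((int c + phi z) mod int N)"
definition F :: "nat \<Rightarrow> real \<times> real \<Rightarrow> nat \<Rightarrow> real" where
  "F c P j = (\<Sum>z \<in> {z \<in> cell P. lab c z = j}. hat z P)"

definition S7 :: "(int \<times> int) set" where
  "S7 = {(0,0),(1,0),(-1,0),(0,1),(0,-1),(1,1),(-1,-1)}"

lemma Npos: "N > 0" using NN n1 by simp

lemma phi_add: "phi (a + b) = phi a + phi b"
  unfolding phi_def by (cases a, cases b) (simp add: algebra_simps)

lemma lab_lt: "lab c z < N"
  unfolding lab_def using Npos by (simp add: nat_less_iff)

lemma lab_eq_iff: "lab c a = lab c b \<longleftrightarrow> (int c + phi a) mod int N = (int c + phi b) mod int N"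
  unfolding lab_def using Npos by (simp add: nat_eq_iff)

lemma lab_eq_dvd: "lab c a = lab c b \<longleftrightarrow> int N dvd (phi a - phi b)"
  unfolding lab_eq_iff by (simp add: mod_eq_dvd_iff)

lemma lab_shift: "int N dvd phi l \<Longrightarrow> lab c (z + l) = lab c z"
  unfolding lab_eq_dvd phi_add by simp

lemma F_sum:
  assumes "finite B" "\<And>z. hat z P \<noteq> 0 \<Longrightarrow> z \<in> B"
  shows "F c P j = (\<Sum>z\<in>B. if lab c z = j then hat z P else 0)"
proof -
  have nz: "\<And>z. z \<notin> cell P \<Longrightarrow> hat z P = 0" using hat_supp by blast
  have nzB: "\<And>z. z \<notin> B \<Longrightarrow> hat z P = 0" using assms(2) by blast
  have "F c P j = (\<Sum>z\<in>cell P. if lab c z = j then hat z P else 0)"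
    unfolding F_def by (simp add: sum.inter_filter finite_cell)
  also have "\<dots> = (\<Sum>z\<in>cell P \<union> B. if lab c z = j then hat z P else 0)"
    by (rule sum.mono_neutral_left) (auto simp: finite_cell assms nz nzB)
  also have "\<dots> = (\<Sum>z\<in>B. if lab c z = j then hat z P else 0)"
    by (intro sum.mono_neutral_right) (auto simp: finite_cell assms nz nzB)
  finally show ?thesis .
qed

lemma F_U:
  assumes "0\<le>t" "t\<le>s" "s\<le>1"
  shows "F c (rp w + (s,t)) j = (if lab c w = j then 1-s else 0) + (if lab c (w+(1,0)) = j then s-t else 0)
     + (if lab c (w+(1,1)) = j then t else 0)"
proof -
  have "F c (rp w + (s,t)) j = (\<Sum>z\<in>{w, w+(1,0), w+(1,1)}. if lab c z = j then hat z (rp w + (s,t)) else 0)"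
    by (rule F_sum) (auto simp: hat_U[OF assms] split: if_splits)
  thus ?thesis by (cases w) (simp add: hat_U[OF assms])
qed

lemma F_D:
  assumes "0\<le>s" "s\<le>t" "t\<le>1"
  shows "F c (rp w + (s,t)) j = (if lab c w = j then 1-t else 0) + (if lab c (w+(0,1)) = j then t-s else 0)
     + (if lab c (w+(1,1)) = j then s else 0)"
proof -
  have "F c (rp w + (s,t)) j = (\<Sum>z\<in>{w, w+(0,1), w+(1,1)}. if lab c z = j then hat z (rp w + (s,t)) else 0)"
    by (rule F_sum) (auto simp: hat_D[OF assms] split: if_splits)
  thus ?thesis by (cases w) (simp add: hat_D[OF assms])
qed

lemma F_periodic:
  assumes "int N dvd phi l"
  shows "F c (P + rp l) = F c P"
proof
  fix j
  have "F c (P + rp l) j = (\<Sum>z\<in>(\<lambda>z. z + l) ` cell P. if lab c z = j then hat z (P + rp l) else 0)"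
  proof (rule F_sum)
    fix z assume "hat z (P + rp l) \<noteq> 0"
    hence "hat (z - l) P \<noteq> 0" using hat_shift[of "z - l" l P] by simp
    hence "z - l \<in> cell P" by (rule hat_supp)
    thus "z \<in> (\<lambda>z. z + l) ` cell P" by (rule rev_image_eqI) simp
  qed (simp add: finite_cell)
  also have "\<dots> = (\<Sum>z\<in>cell P. if lab c (z + l) = j then hat (z + l) (P + rp l) else 0)"
    by (subst sum.reindex) (auto simp: inj_on_def)
  also have "\<dots> = (\<Sum>z\<in>cell P. if lab c z = j then hat z P else 0)"
    unfolding lab_shift[OF assms] hat_shift ..
  also have "\<dots> = F c P j"
    by (rule F_sum[symmetric]) (auto simp: finite_cell hat_supp)
  finally show "F c (P + rp l) j = F c P j" .
qed

lemma dvd_small: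
  fixes m :: int
  assumes "int N dvd m" "-2 * int N < m" "m < 2 * int N"
  shows "m = 0 \<or> m = int N \<or> m = - int N"
proof -
  obtain k where m: "m = int N * k" using assms(1) by (auto elim: dvdE)
  consider "k \<le> -2" | "k = -1" | "k = 0" | "k = 1" | "k \<ge> 2" by linarith
  thus ?thesis
  proof cases
    case 1
    hence "int N * k \<le> int N * (-2)" by (intro mult_left_mono) auto
    thus ?thesis using assms m by linarith
  next
    case 5
    hence "int N * k \<ge> int N * 2" by (intro mult_left_mono) auto
    thus ?thesis using assms m by linarith
  qed (use m in auto)
qed

lemma inj7:
  assumes "d \<in> S7" "d' \<in> S7" "int N dvd (phi d - phi d')"
  shows "d = d'"
proof -
  have f: "int N = int n1 + int n2 + int n3" "int n1 \<ge> 1" "int n1 < int n2" "int n2 < int n3"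
     "2 * int n3 \<noteq> int N" using NN n1 n12 n23 half by linarith+
  have ne: "False" if "int N dvd m" "m \<noteq> 0" "m \<noteq> int N" "m \<noteq> - int N" "-2 * int N < m" "m < 2 * int N" for m
    using dvd_small that by blast
  show ?thesis using assms(1,2)
    unfolding S7_def apply simp
    apply (elim disjE)
    using assms(3) apply (simp_all add: phi_def del: int_dvd_int_iff)
    apply (erule ne; use f in linarith)+
    done
qed

end

context cyc begin

definition gg :: nat where "gg = gcd n1 (gcd n2 n3)"

lemma gg_dvd: "gg dvd n1" "gg dvd n2" "gg dvd n3" "gg dvd N"
proof -
  show a: "gg dvd n1" "gg dvd n2" "gg dvd n3" unfolding gg_def by (meson dvd_trans gcd_dvd1 gcd_dvd2)+
  show "gg dvd N" unfolding NN using a by simp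
qed

lemma gg_pos: "gg > 0" unfolding gg_def using n1 by simp

lemma gg_eq: "gcd n1 (gcd n2 N) = gg"
proof (rule dvd_antisym)
  show "gcd n1 (gcd n2 N) dvd gg" unfolding gg_def
  proof (intro gcd_greatest)
    let ?d = "gcd n1 (gcd n2 N)"
    have a: "?d dvd n1" "?d dvd n2" "?d dvd N" by (auto intro: dvd_trans)
    show "?d dvd n1" "?d dvd n2" by (fact a)+
    have "?d dvd N - n1 - n2" using a by (intro dvd_diff_nat) auto
    thus "?d dvd n3" using NN by simp
  qed
  show "gg dvd gcd n1 (gcd n2 N)" using gg_dvd by simp
qed

lemma bezout3: "\<exists>a b e::int. a * int n1 + b * int n2 + e * int N = int gg"
proof -
  obtain u v :: int where uv: "u * int n2 + v * int N = gcd (int n2) (int N)" using bezout_int by blast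
  obtain p r :: int where pr: "p * int n1 + r * gcd (int n2) (int N) = gcd (int n1) (gcd (int n2) (int N))"
    using bezout_int by blast
  have "gcd (int n1) (gcd (int n2) (int N)) = int gg" using gg_eq by (simp flip: gcd_int_def)
  hence "int gg = p * int n1 + r * (u * int n2 + v * int N)" using pr uv by simp
  hence "p * int n1 + (r * u) * int n2 + (r * v) * int N = int gg" by (simp add: algebra_simps)
  thus ?thesis by blast
qed

lemma phi_diff: "phi (a - b) = phi a - phi b"
  unfolding phi_def by (cases a, cases b) (simp add: algebra_simps)

lemma lab_int: "int (lab c z) = (int c + phi z) mod int N"
  unfolding lab_def using Npos by simp

lemma lab_add_nat:
  assumes "int N dvd (int m - phi d)"
  shows "lab c (z + d) = (lab c z + m) mod N"
proof -
  have "int (lab c (z + d)) = (int c + phi z + phi d) mod int N" by (simp add: lab_int phi_add add.assoc)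
  also have "\<dots> = (int c + phi z + int m) mod int N"
  proof -
    have "int N dvd (phi d - int m)" using assms by (metis dvd_minus_iff minus_diff_eq)
    thus ?thesis by (simp add: mod_eq_dvd_iff)
  qed
  also have "\<dots> = ((int c + phi z) mod int N + int m) mod int N" by (simp add: mod_add_left_eq)
  also have "\<dots> = int ((lab c z + m) mod N)" by (simp add: lab_int zmod_int)
  finally show ?thesis by simp
qed

lemma lab_mod_gg: "c < gg \<Longrightarrow> int (lab c z) mod int gg = int c"
proof -
  assume c: "c < gg"
  have d: "int gg dvd int N" using gg_dvd by simp
  have "int gg dvd phi z" unfolding phi_def using gg_dvd by simp
  hence "(int c + phi z) mod int gg = int c mod int gg" by (simp add: mod_eq_dvd_iff)
  thus ?thesis using c unfolding lab_int by (simp add: mod_mod_cancel[OF d])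
qed

lemma lab_surj:
  assumes "k < N" shows "\<exists>w. lab (k mod gg) w = k"
proof -
  obtain a b e :: int where abe: "a * int n1 + b * int n2 + e * int N = int gg" using bezout3 by blast
  have "int gg dvd int k - int (k mod gg)" by (simp add: mod_eq_dvd_iff zmod_int)
  then obtain q where q: "int k - int (k mod gg) = int gg * q" by (auto elim: dvdE)
  let ?w = "(q * a, q * b)"
  have "phi ?w = q * (a * int n1 + b * int n2)" by (simp add: phi_def algebra_simps)
  also have "\<dots> = (int k - int (k mod gg)) - (q * e) * int N" using abe q by (simp add: algebra_simps flip: abe)
  finally have "int (k mod gg) + phi ?w = int k + (- q * e) * int N" by simp
  hence "int (lab (k mod gg) ?w) = (int k + (- q * e) * int N) mod int N" by (simp add: lab_int)
  also have "\<dots> = int k mod int N" by (simp only: mod_mult_self1)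
  also have "\<dots> = int k" using assms by simp
  finally show ?thesis by auto
qed

lemma lab_S7:
  assumes "a - z \<in> S7" "d \<in> S7"
  shows "lab c a = lab c (z + d) \<longleftrightarrow> a - z = d"
proof
  assume "lab c a = lab c (z + d)"
  hence "int N dvd (phi a - phi (z + d))" by (simp add: lab_eq_dvd)
  hence "int N dvd (phi (a - z) - phi d)" by (simp add: phi_diff phi_add algebra_simps)
  thus "a - z = d" by (rule inj7[OF assms])
next
  assume "a - z = d" thus "lab c a = lab c (z + d)" by (metis add.commute diff_add_cancel)
qed

definition R :: "nat \<Rightarrow> int \<times> int \<Rightarrow> (nat \<Rightarrow> real) \<Rightarrow> real \<times> real" where
  "R c z x = (\<Sum>d\<in>S7. x (lab c (z + d)) *\<^sub>R rp d)"

lemma finite_S7: "finite S7" unfolding S7_def by simp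

lemma recon:
  assumes S: "v1 - z \<in> S7" "v2 - z \<in> S7" "v3 - z \<in> S7"
    and x: "\<And>j. x j = (if lab c v1 = j then a1 else 0) + (if lab c v2 = j then a2 else 0) + (if lab c v3 = j then a3 else 0)"
    and a: "a1 + a2 + a3 = 1"
    and P: "P = a1 *\<^sub>R rp v1 + a2 *\<^sub>R rp v2 + a3 *\<^sub>R rp v3"
  shows "P = rp z + R c z x"
proof -
  have "R c z x = (\<Sum>d\<in>S7. ((if v1 - z = d then a1 else 0) + (if v2 - z = d then a2 else 0)
        + (if v3 - z = d then a3 else 0)) *\<^sub>R rp d)"
    unfolding R_def by (rule sum.cong) (auto simp: x lab_S7[OF S(1)] lab_S7[OF S(2)] lab_S7[OF S(3)])
  also have "\<dots> = (\<Sum>d\<in>S7. (if v1 - z = d then a1 *\<^sub>R rp d else 0)) + (\<Sum>d\<in>S7. (if v2 - z = d then a2 *\<^sub>R rp d else 0))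
       + (\<Sum>d\<in>S7. (if v3 - z = d then a3 *\<^sub>R rp d else 0))"
  proof -
    have "\<And>A B C y. ((if A then a1 else 0) + (if B then a2 else 0) + (if C then a3 else 0)) *\<^sub>R y
       = (if A then a1 *\<^sub>R y else 0) + (if B then a2 *\<^sub>R y else 0) + (if C then a3 *\<^sub>R y else (0::real\<times>real))"
      by (simp add: scaleR_add_left)
    thus ?thesis by (simp only: sum.distrib)
  qed
  also have "\<dots> = a1 *\<^sub>R rp (v1 - z) + a2 *\<^sub>R rp (v2 - z) + a3 *\<^sub>R rp (v3 - z)"
    using S by (simp add: sum.delta finite_S7)
  also have "\<dots> = P - (a1 + a2 + a3) *\<^sub>R rp z"
    unfolding P rp_diff by (simp add: algebra_simps scaleR_add_left)
  finally show ?thesis using a by simp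
qed

end

context cyc begin

lemma cyc_tri_eq: "cyc_triangles n1 n2 n3 =
   {{k mod N, (k + n1) mod N, (k + n1 + n2) mod N} | k. k < N} \<union>
   {{k mod N, (k + N - n1) mod N, (k + 2 * N - n1 - n2) mod N} | k. k < N}"
  unfolding cyc_triangles_def Let_def NN ..

lemma lab_ne: assumes "d \<in> S7" "d' \<in> S7" "d \<noteq> d'" shows "lab c (w + d) \<noteq> lab c (w + d')"
proof
  assume "lab c (w + d) = lab c (w + d')"
  hence "int N dvd phi (w + d) - phi (w + d')" by (simp add: lab_eq_dvd)
  hence "int N dvd phi d - phi d'" by (simp add: phi_add)
  thus False using inj7[OF assms(1,2)] assms(3) by blast
qed

lemma pair00: "((0::int), (0::int)) = 0" by (simp add: zero_prod_def)

lemma w00: "w + (0,0) = (w::int\<times>int)" by (cases w) simp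

lemma distU: "lab c w \<noteq> lab c (w + (1,0))" "lab c w \<noteq> lab c (w + (1,1))" "lab c (w + (1,0)) \<noteq> lab c (w + (1,1))"
  using lab_ne[of "(0,0)" "(1,0)" c w] lab_ne[of "(0,0)" "(1,1)" c w] lab_ne[of "(1,0)" "(1,1)" c w]
  by (auto simp: S7_def w00)

lemma distD: "lab c w \<noteq> lab c (w + (0,1))" "lab c w \<noteq> lab c (w + (1,1))" "lab c (w + (0,1)) \<noteq> lab c (w + (1,1))"
  using lab_ne[of "(0,0)" "(0,1)" c w] lab_ne[of "(0,0)" "(1,1)" c w] lab_ne[of "(0,1)" "(1,1)" c w]
  by (auto simp: S7_def w00)

lemma labU1: "lab c (w + (1,0)) = (lab c w + n1) mod N"
  by (rule lab_add_nat) (simp add: phi_def)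
lemma labU2: "lab c (w + (1,1)) = (lab c w + n1 + n2) mod N"
  using lab_add_nat[of "n1 + n2" "(1,1)" c w] by (simp add: phi_def add.assoc)
lemma labD1: "lab c (w + (-1,0)) = (lab c w + N - n1) mod N"
proof -
  have "lab c (w + (-1,0)) = (lab c w + (N - n1)) mod N"
  proof (rule lab_add_nat)
    have "int (N - n1) - phi (-1,0) = int N * 1" using NN by (simp add: phi_def of_nat_diff)
    thus "int N dvd int (N - n1) - phi (-1,0)" by (metis dvd_triv_left)
  qed
  thus ?thesis using NN by simp
qed
lemma labD2: "lab c (w + (-1,-1)) = (lab c w + 2 * N - n1 - n2) mod N"
proof -
  have "lab c (w + (-1,-1)) = (lab c w + (2 * N - n1 - n2)) mod N"
  proof (rule lab_add_nat)
    have "int (2 * N - n1 - n2) - phi (-1,-1) = int N * 2" using NN by (simp add: phi_def of_nat_diff)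
    thus "int N dvd int (2 * N - n1 - n2) - phi (-1,-1)" by (metis dvd_triv_left)
  qed
  moreover have "lab c w + (2 * N - n1 - n2) = lab c w + 2 * N - n1 - n2" using NN by linarith
  ultimately show ?thesis by simp
qed

definition tri where
  "tri c P v1 v2 v3 a1 a2 a3 \<longleftrightarrow> 0 \<le> a1 \<and> 0 \<le> a2 \<and> 0 \<le> a3 \<and> a1 + a2 + a3 = 1 \<and>
     P = a1 *\<^sub>R rp v1 + a2 *\<^sub>R rp v2 + a3 *\<^sub>R rp v3 \<and>
     (\<forall>j. F c P j = (if lab c v1 = j then a1 else 0) + (if lab c v2 = j then a2 else 0) + (if lab c v3 = j then a3 else 0)) \<and>
     (\<forall>v\<in>{v1,v2,v3}. \<forall>v'\<in>{v1,v2,v3}. v - v' \<in> S7) \<and>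
     {lab c v1, lab c v2, lab c v3} \<in> cyc_triangles n1 n2 n3"

lemma tri_exists: "\<exists>v1 v2 v3 a1 a2 a3. tri c P v1 v2 v3 a1 a2 a3"
proof -
  obtain w s t where P: "P = rp w + (s,t)" and st: "0 \<le> s" "s < 1" "0 \<le> t" "t < 1"
    using floor_decomp by blast
  show ?thesis
  proof (cases "t \<le> s")
    case True
    have "tri c P w (w + (1,0)) (w + (1,1)) (1-s) (s-t) t"
      unfolding tri_def
    proof (intro conjI)
      show "P = (1 - s) *\<^sub>R rp w + (s - t) *\<^sub>R rp (w + (1, 0)) + t *\<^sub>R rp (w + (1, 1))"
        unfolding P rp_def by (cases w) (simp add: algebra_simps)
      show "\<forall>j. F c P j = (if lab c w = j then 1 - s else 0) + (if lab c (w + (1, 0)) = j then s - t else 0) +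
        (if lab c (w + (1, 1)) = j then t else 0)"
        unfolding P using F_U[of t s] True st by simp
      show "\<forall>v\<in>{w, w + (1, 0), w + (1, 1)}. \<forall>v'\<in>{w, w + (1, 0), w + (1, 1)}. v - v' \<in> S7"
        by (cases w) (simp add: S7_def zero_prod_def)
      show "{lab c w, lab c (w + (1, 0)), lab c (w + (1, 1))} \<in> cyc_triangles n1 n2 n3"
        unfolding cyc_tri_eq labU1 labU2
        apply (rule UnI1, rule CollectI, rule exI[of _ "lab c w"])
        using lab_lt[of c w] by simp
    qed (use True st in auto)
    thus ?thesis by blast
  next
    case False
    have "tri c P w (w + (0,1)) (w + (1,1)) (1-t) (t-s) s"
      unfolding tri_def
    proof (intro conjI)
      show "P = (1 - t) *\<^sub>R rp w + (t - s) *\<^sub>R rp (w + (0, 1)) + s *\<^sub>R rp (w + (1, 1))"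
        unfolding P rp_def by (cases w) (simp add: algebra_simps)
      show "\<forall>j. F c P j = (if lab c w = j then 1 - t else 0) + (if lab c (w + (0, 1)) = j then t - s else 0) +
        (if lab c (w + (1, 1)) = j then s else 0)"
        unfolding P using F_D[of s t] False st by simp
      show "\<forall>v\<in>{w, w + (0, 1), w + (1, 1)}. \<forall>v'\<in>{w, w + (0, 1), w + (1, 1)}. v - v' \<in> S7"
        by (cases w) (simp add: S7_def zero_prod_def)
      have e1: "w + (0,1) = (w + (1,1)) + (-1,0)" "w = (w + (1,1)) + (-1,-1)" by (cases w, simp)+
      let ?k = "lab c (w + (1,1))"
      have e1: "w + (0,1) = (w + (1,1)) + (-1,0)" "w = (w + (1,1)) + (-1,-1)" by (cases w, simp)+
      have h1: "lab c (w + (0,1)) = (?k + N - n1) mod N" using labD1[of c "w + (1,1)"] e1(1) by metis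
      have h2: "lab c w = (?k + 2 * N - n1 - n2) mod N" using labD2[of c "w + (1,1)"] e1(2) by metis
      have h0: "?k mod N = ?k" using lab_lt[of c "w + (1,1)"] by simp
      show "{lab c w, lab c (w + (0, 1)), lab c (w + (1, 1))} \<in> cyc_triangles n1 n2 n3"
        unfolding cyc_tri_eq
        apply (rule UnI2, rule CollectI, rule exI[of _ ?k])
        unfolding h0 h1 h2 using lab_lt[of c "w + (1,1)"] by blast
    qed (use False st in auto)
    thus ?thesis by blast
  qed
qed

lemma F_geom: "F c P \<in> geom_real (cyc_complex n1 n2 n3)"
proof -
  obtain v1 v2 v3 a1 a2 a3 where T: "tri c P v1 v2 v3 a1 a2 a3" using tri_exists by blast
  let ?\<sigma> = "{lab c v1, lab c v2, lab c v3}"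
  have Fj: "\<And>j. F c P j = (if lab c v1 = j then a1 else 0) + (if lab c v2 = j then a2 else 0) + (if lab c v3 = j then a3 else 0)"
    and a: "0 \<le> a1" "0 \<le> a2" "0 \<le> a3" "a1 + a2 + a3 = 1"
    and s: "?\<sigma> \<in> cyc_triangles n1 n2 n3" using T unfolding tri_def by blast+
  have "(\<Sum>i\<in>?\<sigma>. F c P i) = (\<Sum>i\<in>?\<sigma>. if lab c v1 = i then a1 else 0) + (\<Sum>i\<in>?\<sigma>. if lab c v2 = i then a2 else 0)
     + (\<Sum>i\<in>?\<sigma>. if lab c v3 = i then a3 else 0)" unfolding Fj by (simp add: sum.distrib)
  also have "\<dots> = 1" using a(4) by (simp add: sum.delta')
  finally have sum1: "(\<Sum>i\<in>?\<sigma>. F c P i) = 1" .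
  show ?thesis unfolding geom_real_def cyc_complex_def
    apply (rule CollectI, rule bexI[of _ ?\<sigma>])
    using a sum1 by (auto simp: Fj s)
qed

lemma F_pos_vertex:
  assumes T: "tri c P v1 v2 v3 a1 a2 a3"
  shows "\<exists>z\<in>{v1,v2,v3}. F c P (lab c z) > 0"
proof -
  have Fj: "\<And>j. F c P j = (if lab c v1 = j then a1 else 0) + (if lab c v2 = j then a2 else 0) + (if lab c v3 = j then a3 else 0)"
    and a: "0 \<le> a1" "0 \<le> a2" "0 \<le> a3" "a1 + a2 + a3 = 1" using T unfolding tri_def by blast+
  have "a1 > 0 \<or> a2 > 0 \<or> a3 > 0" using a by linarith
  moreover have "a1 > 0 \<Longrightarrow> F c P (lab c v1) > 0" using a by (simp add: Fj)
  moreover have "a2 > 0 \<Longrightarrow> F c P (lab c v2) > 0" using a by (simp add: Fj)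
  moreover have "a3 > 0 \<Longrightarrow> F c P (lab c v3) > 0" using a by (simp add: Fj)
  ultimately show ?thesis by blast
qed

lemma F_pos_label:
  assumes T: "tri c P v1 v2 v3 a1 a2 a3" and "F c P j > 0"
  shows "\<exists>z\<in>{v1,v2,v3}. lab c z = j"
proof (rule ccontr)
  assume "\<not> ?thesis"
  hence "F c P j = 0" using T unfolding tri_def by auto
  thus False using assms(2) by simp
qed

lemma F_recon:
  assumes T: "tri c P v1 v2 v3 a1 a2 a3" and z: "z \<in> {v1,v2,v3}"
  shows "P = rp z + R c z (F c P)"
proof (rule recon)
  show "v1 - z \<in> S7" "v2 - z \<in> S7" "v3 - z \<in> S7" using T z unfolding tri_def by blast+
qed (use T in \<open>auto simp: tri_def\<close>)

lemma R_shift: "int N dvd phi l \<Longrightarrow> R c (z + l) x = R c z x"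
  unfolding R_def
proof (rule sum.cong[OF refl])
  fix d assume l: "int N dvd phi l"
  have "z + l + d = (z + d) + l" by (simp add: algebra_simps)
  hence "lab c (z + l + d) = lab c (z + d)" using lab_shift[OF l, of c "z + d"] by metis
  thus "x (lab c (z + l + d)) *\<^sub>R rp d = x (lab c (z + d)) *\<^sub>R rp d" by simp
qed

lemma F_fiber:
  assumes E: "F c P = F c' P'" and c: "c < gg" "c' < gg"
  shows "c = c' \<and> (\<exists>l. int N dvd phi l \<and> P = P' + rp l)"
proof -
  obtain v1 v2 v3 a1 a2 a3 where T: "tri c P v1 v2 v3 a1 a2 a3" using tri_exists by blast
  obtain u1 u2 u3 b1 b2 b3 where T': "tri c' P' u1 u2 u3 b1 b2 b3" using tri_exists by blast
  obtain z where z: "z \<in> {v1,v2,v3}" "F c P (lab c z) > 0" using F_pos_vertex[OF T] by blast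
  have "F c' P' (lab c z) > 0" using E z(2) by simp
  then obtain z' where z': "z' \<in> {u1,u2,u3}" "lab c' z' = lab c z"
    using F_pos_label[OF T', of "lab c z"] by blast
  have cc: "c = c'" using lab_mod_gg[OF c(1), of z] lab_mod_gg[OF c(2), of z'] z'(2) by simp
  have "int N dvd phi z - phi z'" using z'(2) cc lab_eq_dvd by metis
  hence d: "int N dvd phi (z - z')" by (simp add: phi_diff)
  have "P = rp z + R c z (F c P)" by (rule F_recon[OF T z(1)])
  moreover have "P' = rp z' + R c z' (F c P')" using F_recon[OF T' z'(1)] cc by simp
  moreover have "R c z (F c P) = R c z' (F c P')"
    using R_shift[OF d, of c z' "F c P"] E cc by simp
  moreover have "rp z = rp z' + rp (z - z')" by (simp add: rp_diff)
  ultimately have "P = P' + rp (z - z')" by (simp add: algebra_simps)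
  thus ?thesis using cc d by blast
qed

end

context cyc begin

lemma cyc_edges_eq: "cyc_edges n1 n2 n3 = {{k mod N, (k + n) mod N} | k n. k < N \<and> n \<in> {n1, n2, n3}}"
  unfolding cyc_edges_def Let_def NN ..

lemma cyc_complex_eq: "cyc_complex n1 n2 n3 = cyc_triangles n1 n2 n3 \<union> cyc_edges n1 n2 n3 \<union> {{k} | k. k < N}"
  unfolding cyc_complex_def NN ..

lemma up_in: "k < N \<Longrightarrow> {k mod N, (k + n1) mod N, (k + n1 + n2) mod N} \<in> cyc_triangles n1 n2 n3"
  unfolding cyc_tri_eq by blast
lemma dn_in: "k < N \<Longrightarrow> {k mod N, (k + N - n1) mod N, (k + 2 * N - n1 - n2) mod N} \<in> cyc_triangles n1 n2 n3"
  unfolding cyc_tri_eq by blast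

lemma sub_tri:
  assumes "\<sigma> \<in> cyc_complex n1 n2 n3"
  shows "\<exists>\<tau>\<in>cyc_triangles n1 n2 n3. \<sigma> \<subseteq> \<tau>"
proof -
  have NN': "N \<ge> n1 + n2" using NN by simp
  consider (t) "\<sigma> \<in> cyc_triangles n1 n2 n3" | (e) k n where "k < N" "n \<in> {n1,n2,n3}" "\<sigma> = {k mod N, (k + n) mod N}"
    | (v) k where "k < N" "\<sigma> = {k}"
    using assms unfolding cyc_complex_eq cyc_edges_eq by blast
  thus ?thesis
  proof cases
    case t thus ?thesis by blast
  next
    case v thus ?thesis by (intro bexI[OF _ up_in[OF v(1)]]) (use v in simp)
  next
    case e
    consider "n = n1" | "n = n2" | "n = n3" using e(2) by blast
    thus ?thesis
    proof cases
      case 1 thus ?thesis by (intro bexI[OF _ up_in[OF e(1)]]) (use e in auto)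
    next
      case 2
      let ?k = "(k + n1 + n2) mod N"
      have "?k < N" using Npos by simp
      have a: "(?k + N - n1) mod N = (k + n) mod N"
      proof -
        have "(?k + N - n1) mod N = (?k + (N - n1)) mod N" using NN' by (simp add: add_diff_assoc)
        also have "\<dots> = (k + n1 + n2 + (N - n1)) mod N" by (simp add: mod_add_left_eq)
        also have "k + n1 + n2 + (N - n1) = (k + n) + N" using 2 NN' by simp
        finally show ?thesis by simp
      qed
      have b: "(?k + 2 * N - n1 - n2) mod N = k mod N"
      proof -
        have "(?k + 2 * N - n1 - n2) mod N = (?k + (2 * N - n1 - n2)) mod N" using NN' by simp
        also have "\<dots> = (k + n1 + n2 + (2 * N - n1 - n2)) mod N" by (simp add: mod_add_left_eq)
        also have "k + n1 + n2 + (2 * N - n1 - n2) = k + N * 2" using NN' by simp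
        finally show ?thesis by simp
      qed
      show ?thesis by (intro bexI[OF _ dn_in[OF \<open>?k < N\<close>]]) (use a b e(3) in auto)
    next
      case 3
      have b: "(k + 2 * N - n1 - n2) mod N = (k + n) mod N"
      proof -
        have "k + 2 * N - n1 - n2 = (k + n) + N" using 3 NN by simp
        thus ?thesis by simp
      qed
      show ?thesis by (intro bexI[OF _ dn_in[OF e(1)]]) (use b e(3) in auto)
    qed
  qed
qed

lemma geom_surj:
  assumes "x \<in> geom_real (cyc_complex n1 n2 n3)"
  shows "\<exists>c<gg. \<exists>P. F c P = x"
proof -
  obtain \<sigma> where \<sigma>: "\<sigma> \<in> cyc_complex n1 n2 n3" and nn: "\<And>i. 0 \<le> x i"
    and z: "\<And>i. i \<notin> \<sigma> \<Longrightarrow> x i = 0" and s: "(\<Sum>i\<in>\<sigma>. x i) = 1"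
    using assms unfolding geom_real_def by blast
  obtain \<tau> where \<tau>: "\<tau> \<in> cyc_triangles n1 n2 n3" "\<sigma> \<subseteq> \<tau>" using sub_tri[OF \<sigma>] by blast
  have zt: "\<And>i. i \<notin> \<tau> \<Longrightarrow> x i = 0" using z \<tau>(2) by blast
  have fin: "finite \<tau>" using \<tau>(1) unfolding cyc_tri_eq by auto
  have st: "(\<Sum>i\<in>\<tau>. x i) = 1"
  proof -
    have "(\<Sum>i\<in>\<tau>. x i) = (\<Sum>i\<in>\<sigma>. x i)"
      by (rule sum.mono_neutral_right) (use fin \<tau>(2) z in auto)
    thus ?thesis using s by simp
  qed
  have cg: "\<And>k. k mod gg < gg" using gg_pos by simp
  consider (up) k where "k < N" "\<tau> = {k mod N, (k + n1) mod N, (k + n1 + n2) mod N}"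
    | (dn) k where "k < N" "\<tau> = {k mod N, (k + N - n1) mod N, (k + 2 * N - n1 - n2) mod N}"
    using \<tau>(1) unfolding cyc_tri_eq by blast
  thus ?thesis
  proof cases
    case up
    let ?c = "k mod gg"
    obtain w where w: "lab ?c w = k" using lab_surj[OF up(1)] by blast
    let ?L0 = "lab ?c w" and ?L1 = "lab ?c (w + (1,0))" and ?L2 = "lab ?c (w + (1,1))"
    have tau: "\<tau> = {?L0, ?L1, ?L2}" unfolding up(2) labU1 labU2 w using up(1) by simp
    have d: "?L0 \<noteq> ?L1" "?L0 \<noteq> ?L2" "?L1 \<noteq> ?L2" using distU by blast+
    have sum3: "x ?L0 + x ?L1 + x ?L2 = 1" using st d unfolding tau by simp
    let ?s = "x ?L1 + x ?L2" and ?t = "x ?L2"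
    have "F ?c (rp w + (?s, ?t)) = x"
    proof
      fix j
      have "F ?c (rp w + (?s, ?t)) j = (if ?L0 = j then 1 - ?s else 0) + (if ?L1 = j then ?s - ?t else 0) + (if ?L2 = j then ?t else 0)"
        by (rule F_U) (use nn[of ?L0] nn[of ?L1] nn[of ?L2] sum3 in auto)
      also have "\<dots> = x j"
      proof (cases "j \<in> \<tau>")
        case True thus ?thesis unfolding tau using d sum3 by auto
      next
        case False thus ?thesis using zt[OF False] unfolding tau by auto
      qed
      finally show "F ?c (rp w + (?s, ?t)) j = x j" .
    qed
    thus ?thesis using cg by blast
  next
    case dn
    let ?c = "k mod gg"
    obtain w where w: "lab ?c w = k" using lab_surj[OF dn(1)] by blast
    let ?w0 = "w + (-1,-1)"
    have e: "?w0 + (1,1) = w" "?w0 + (0,1) = w + (-1,0)" by (cases w, simp)+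
    let ?L0 = "lab ?c ?w0" and ?L1 = "lab ?c (?w0 + (0,1))" and ?L2 = "lab ?c (?w0 + (1,1))"
    have km: "k mod N = k" using dn(1) by simp
    have tau: "\<tau> = {?L0, ?L1, ?L2}" unfolding dn(2) e labD1 labD2 w km by blast
    have d: "?L0 \<noteq> ?L1" "?L0 \<noteq> ?L2" "?L1 \<noteq> ?L2" using distD by blast+
    have sum3: "x ?L0 + x ?L1 + x ?L2 = 1" using st d unfolding tau by simp
    let ?s = "x ?L2" and ?t = "x ?L2 + x ?L1"
    have "F ?c (rp ?w0 + (?s, ?t)) = x"
    proof
      fix j
      have "F ?c (rp ?w0 + (?s, ?t)) j = (if ?L0 = j then 1 - ?t else 0) + (if ?L1 = j then ?t - ?s else 0) + (if ?L2 = j then ?s else 0)"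
        by (rule F_D) (use nn[of ?L0] nn[of ?L1] nn[of ?L2] sum3 in auto)
      also have "\<dots> = x j"
      proof (cases "j \<in> \<tau>")
        case True thus ?thesis unfolding tau using d sum3 by auto
      next
        case False thus ?thesis using zt[OF False] unfolding tau by auto
      qed
      finally show "F ?c (rp ?w0 + (?s, ?t)) j = x j" .
    qed
    thus ?thesis using cg by blast
  qed
qed

end

context cyc begin

definition dd :: nat where "dd = gcd n1 N"
definition pp :: nat where "pp = N div dd"
definition rr :: nat where "rr = dd div gg"
definition qq :: int where "qq = (SOME q. int N dvd q * int n1 + int rr * int n2)"

lemma dd_facts: "dd > 0" "dd dvd N" "dd dvd n1" "pp * dd = N" "pp > 0"
proof -
  show "dd > 0" "dd dvd N" "dd dvd n1" unfolding dd_def using n1 by auto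
  thus "pp * dd = N" unfolding pp_def by simp
  thus "pp > 0" using Npos by (metis gr0I mult_is_0)
qed

lemma gg_dd: "gg dvd dd" "rr * gg = dd" "rr > 0"
proof -
  show a: "gg dvd dd" unfolding dd_def using gg_dvd by simp
  thus "rr * gg = dd" unfolding rr_def by simp
  thus "rr > 0" using dd_facts(1) by (metis gr0I mult_is_0)
qed

lemma gcd_dd_n2: "gcd dd n2 = gg"
  unfolding dd_def gg_eq[symmetric] by (simp add: ac_simps)

lemma cop_rr: "coprime rr (n2 div gg)"
  using div_gcd_coprime[of dd n2] dd_facts(1) unfolding gcd_dd_n2 rr_def by simp

lemma cop_pp: "coprime pp (n1 div dd)"
  using div_gcd_coprime[of n1 N] n1 unfolding pp_def dd_def by (simp add: coprime_commute)

lemma qq_ex: "\<exists>q. int N dvd q * int n1 + int rr * int n2"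
proof -
  obtain \<alpha> \<beta> :: int where ab: "\<alpha> * int n1 + \<beta> * int N = int dd"
    using bezout_int[of "int n1" "int N"] unfolding dd_def by (auto simp flip: gcd_int_def)
  define m where "m = n2 div gg"
  have n2: "n2 = gg * m" unfolding m_def using gg_dvd(2) by simp
  have rn2: "int rr * int n2 = int dd * int m" using gg_dd(2) n2 by (metis mult.assoc of_nat_mult)
  have "(- \<alpha> * int m) * int n1 + int rr * int n2 = int m * (int dd - \<alpha> * int n1)"
    unfolding rn2 by (simp add: algebra_simps)
  also have "\<dots> = int N * (int m * \<beta>)" using ab by (simp add: algebra_simps flip: ab)
  finally show ?thesis by (metis dvd_triv_left)
qed

lemma qq: "int N dvd qq * int n1 + int rr * int n2"
  unfolding qq_def using qq_ex by (rule someI_ex)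

definition lat :: "int \<times> int \<Rightarrow> bool" where "lat l \<longleftrightarrow> int N dvd phi l"

lemma lat_comb: "lat (i * int pp + j * qq, j * int rr)"
proof -
  have "int N dvd int pp * int n1"
  proof -
    have "int pp * int n1 = int N * int (n1 div dd)"
      using dd_facts(3,4) by (metis dvd_mult_div_cancel mult.assoc mult.commute of_nat_mult)
    thus ?thesis by simp
  qed
  hence "int N dvd i * (int pp * int n1) + j * (qq * int n1 + int rr * int n2)"
    using qq by (metis dvd_add dvd_mult)
  thus ?thesis unfolding lat_def phi_def by (simp add: algebra_simps)
qed

lemma lat_basis:
  assumes "lat l" shows "\<exists>i j. l = (i * int pp + j * qq, j * int rr)"
proof -
  obtain a b where l: "l = (a, b)" by (cases l)
  have N: "int N dvd a * int n1 + b * int n2" using assms unfolding lat_def phi_def l by simp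
  have "int dd dvd a * int n1 + b * int n2" using N dd_facts(2) by (meson dvd_trans int_dvd_int_iff)
  moreover have "int dd dvd a * int n1" using dd_facts(3) by simp
  ultimately have "int dd dvd b * int n2" by (simp add: dvd_add_right_iff)
  hence "int rr * int gg dvd (b * int (n2 div gg)) * int gg"
    using gg_dd(2) gg_dvd(2) by (metis mult.assoc mult.commute dvd_mult_div_cancel of_nat_mult)
  hence "int rr dvd b * int (n2 div gg)" using gg_pos by simp
  hence "int rr dvd b" using cop_rr by (simp add: coprime_dvd_mult_left_iff)
  then obtain j where bj: "b = int rr * j" by (elim dvdE)
  have "int N dvd (a * int n1 + b * int n2) - j * (qq * int n1 + int rr * int n2)"
    using N qq by (metis dvd_diff dvd_mult)
  hence "int N dvd (a - j * qq) * int n1" by (simp add: bj algebra_simps)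
  hence "int pp * int dd dvd ((a - j * qq) * int (n1 div dd)) * int dd"
    using dd_facts(3,4) by (metis mult.assoc mult.commute dvd_mult_div_cancel of_nat_mult)
  hence "int pp dvd (a - j * qq) * int (n1 div dd)" using dd_facts(1) by simp
  hence "int pp dvd a - j * qq" using cop_pp by (simp add: coprime_dvd_mult_left_iff)
  then obtain i where ai: "a - j * qq = int pp * i" by (elim dvdE)
  have "l = (i * int pp + j * qq, j * int rr)" unfolding l using ai bj by (simp add: algebra_simps)
  thus ?thesis by blast
qed

definition Amap :: "real \<times> real \<Rightarrow> real \<times> real" where
  "Amap st = (fst st * pp + snd st * qq, snd st * rr)"

lemma rp_comb: "rp (i * int pp + j * qq, j * int rr) = Amap (of_int i, of_int j)"
  unfolding rp_def Amap_def by simp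

lemma Amap_add: "Amap (x + y) = Amap x + Amap y"
  unfolding Amap_def by (simp add: algebra_simps)

lemma F_A_eq:
  assumes "c < gg" "c' < gg"
  shows "F c (Amap x) = F c' (Amap y) \<longleftrightarrow> c = c' \<and> (\<exists>(i::int) (j::int). fst x = fst y + of_int i \<and> snd x = snd y + of_int j)"
proof
  assume "F c (Amap x) = F c' (Amap y)"
  from F_fiber[OF this assms] obtain l where cc: "c = c'" and l: "int N dvd phi l" "Amap x = Amap y + rp l" by blast
  obtain i j where lij: "l = (i * int pp + j * qq, j * int rr)" using lat_basis l(1) unfolding lat_def by blast
  have e: "Amap x = Amap (y + (of_int i, of_int j))" using l(2) unfolding lij rp_comb Amap_add by simp
  have rr0: "real rr \<noteq> 0" "real pp \<noteq> 0" using gg_dd(3) dd_facts(5) by auto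
  from e have "snd x * rr = (snd y + j) * rr" unfolding Amap_def by simp
  hence t: "snd x = snd y + j" using rr0 by simp
  from e have "fst x * pp + snd x * qq = (fst y + i) * pp + (snd y + j) * qq" unfolding Amap_def by simp
  hence "fst x * pp = (fst y + i) * pp" using t by simp
  hence "fst x = fst y + i" using rr0 by simp
  thus "c = c' \<and> (\<exists>(i::int) (j::int). fst x = fst y + of_int i \<and> snd x = snd y + of_int j)" using cc t by blast
next
  assume "c = c' \<and> (\<exists>(i::int) (j::int). fst x = fst y + of_int i \<and> snd x = snd y + of_int j)"
  then obtain i j where cc: "c = c'" and ij: "fst x = fst y + of_int i" "snd x = snd y + of_int j" by blast
  have "Amap x = Amap y + rp (i * int pp + j * qq, j * int rr)"
    unfolding rp_comb Amap_add[symmetric] using ij by (cases x, cases y) simp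
  thus "F c (Amap x) = F c' (Amap y)" using F_periodic lat_comb[of i j] cc unfolding lat_def by simp
qed

lemma A_surj: "\<exists>st. F c P = F c (Amap st) \<and> 0 \<le> fst st \<and> fst st \<le> 1 \<and> 0 \<le> snd st \<and> snd st \<le> 1"
proof -
  have rr0: "real rr \<noteq> 0" "real pp \<noteq> 0" using gg_dd(3) dd_facts(5) by auto
  define t where "t = snd P / rr"
  define s where "s = (fst P - t * qq) / pp"
  have P: "P = Amap (s, t)" unfolding Amap_def s_def t_def using rr0 by (cases P) simp
  define i where "i = \<lfloor>s\<rfloor>"
  define j where "j = \<lfloor>t\<rfloor>"
  have "Amap (s,t) = Amap (s - i, t - j) + rp (i * int pp + j * qq, j * int rr)"
    unfolding rp_comb Amap_add[symmetric] by simp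
  hence "F c P = F c (Amap (s - i, t - j))" using F_periodic lat_comb[of i j] P unfolding lat_def by simp
  moreover have "0 \<le> s - i" "s - i \<le> 1" "0 \<le> t - j" "t - j \<le> 1" unfolding i_def j_def by linarith+
  ultimately show ?thesis by (intro exI[of _ "(s - i, t - j)"]) simp
qed

end

lemma hat_cont: "continuous_on UNIV (hat z)"
  unfolding hat_def by (intro continuous_on_max continuous_on_const continuous_on_diff continuous_on_rabs continuous_on_fst continuous_on_snd continuous_on_id)

lemma hat_isCont: "isCont (hat z) P"
  using hat_cont continuous_on_eq_continuous_at open_UNIV by blast

lemma quotient_homeo:
  fixes f :: "'a::t2_space \<Rightarrow> 'b::t2_space" and g :: "'a \<Rightarrow> 'c::t2_space"
  assumes D: "compact D" and cf: "continuous_on D f" and cg: "continuous_on D g"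
    and fD: "f ` D = T" and gD: "g ` D = U"
    and fib: "\<And>x y. x \<in> D \<Longrightarrow> y \<in> D \<Longrightarrow> f x = f y \<longleftrightarrow> g x = g y"
  shows "T homeomorphic U"
proof -
  define h where "h y = g (SOME x. x \<in> D \<and> f x = y)" for y
  have hf: "h (f x) = g x" if "x \<in> D" for x
  proof -
    have "\<exists>x'. x' \<in> D \<and> f x' = f x" using that by blast
    hence "(SOME x'. x' \<in> D \<and> f x' = f x) \<in> D \<and> f (SOME x'. x' \<in> D \<and> f x' = f x) = f x" by (rule someI_ex)
    thus ?thesis unfolding h_def using fib that by blast
  qed
  have cT: "compact T" using compact_continuous_image[OF cf D] fD by simp
  have hT: "h ` T = U"
  proof
    show "h ` T \<subseteq> U"
    proof
      fix u assume "u \<in> h ` T"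
      then obtain x where "x \<in> D" "u = h (f x)" using fD by blast
      thus "u \<in> U" using hf gD by blast
    qed
    show "U \<subseteq> h ` T"
    proof
      fix u assume "u \<in> U"
      then obtain x where x: "x \<in> D" "u = g x" using gD by blast
      hence "u = h (f x)" "f x \<in> T" using hf fD by auto
      thus "u \<in> h ` T" by blast
    qed
  qed
  have inj: "inj_on h T"
  proof (rule inj_onI)
    fix y1 y2 assume "y1 \<in> T" "y2 \<in> T" "h y1 = h y2"
    then obtain x1 x2 where "x1 \<in> D" "x2 \<in> D" "y1 = f x1" "y2 = f x2" "g x1 = g x2"
      using fD hf by auto
    thus "y1 = y2" using fib by blast
  qed
  have cont: "continuous_on T h"
    unfolding continuous_on_closed_vimage[OF compact_imp_closed[OF cT]]
  proof (intro allI impI)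
    fix B :: "'c set" assume B: "closed B"
    have eq: "h -` B \<inter> T = f ` (g -` B \<inter> D)"
    proof
      show "h -` B \<inter> T \<subseteq> f ` (g -` B \<inter> D)"
      proof
        fix y assume y: "y \<in> h -` B \<inter> T"
        then obtain x where x: "x \<in> D" "y = f x" using fD by blast
        hence "g x \<in> B" using y hf by auto
        thus "y \<in> f ` (g -` B \<inter> D)" using x by blast
      qed
      show "f ` (g -` B \<inter> D) \<subseteq> h -` B \<inter> T"
      proof
        fix y assume "y \<in> f ` (g -` B \<inter> D)"
        then obtain x where x: "x \<in> D" "g x \<in> B" "y = f x" by blast
        thus "y \<in> h -` B \<inter> T" using hf fD by auto
      qed
    qed
    have "closed (g -` B \<inter> D)" by (rule closed_vimage_Int[OF B cg compact_imp_closed[OF D]])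
    hence "compact (D \<inter> (g -` B \<inter> D))" using D by blast
    hence "compact (g -` B \<inter> D)" by (simp add: Int_absorb1 Int_commute)
    hence "compact (f ` (g -` B \<inter> D))"
      by (rule compact_continuous_image[OF continuous_on_subset[OF cf], rotated]) auto
    thus "closed (h -` B \<inter> T)" unfolding eq by (rule compact_imp_closed)
  qed
  show ?thesis using homeomorphic_compact[OF cT cont hT inj] .
qed

lemma circ: assumes "z \<in> sphere (0::complex) 1" shows "\<exists>s\<in>{0..1}. cis (2*pi * s) = z"
proof -
  have z: "cmod z = 1" using assms by simp
  hence z0: "z \<noteq> 0" by auto
  have cz: "cis (Arg z) = z" using cis_Arg[OF z0] z by (simp add: sgn_eq)
  have b: "- pi < Arg z" "Arg z \<le> pi" using Arg_bounded by auto
  show ?thesis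
  proof (cases "Arg z \<ge> 0")
    case True
    have "cis (2 * pi * (Arg z / (2*pi))) = z" using cz by simp
    moreover have "Arg z / (2*pi) \<in> {0..1}" using True b by (auto simp: field_simps)
    ultimately show ?thesis by blast
  next
    case False
    have "2 * pi * (Arg z / (2*pi) + 1) = Arg z + 2 * pi" by (simp add: algebra_simps)
    hence "cis (2 * pi * (Arg z / (2*pi) + 1)) = z" using cz by (simp add: cis.ctr)
    moreover have "Arg z / (2*pi) + 1 \<in> {0..1}" using False b by (auto simp: field_simps)
    ultimately show ?thesis by blast
  qed
qed

lemma cis_eq_iff2: "cis (2*pi * s) = cis (2*pi * s') \<longleftrightarrow> (\<exists>i::int. s = s' + of_int i)"
proof
  assume "cis (2*pi * s) = cis (2*pi * s')"
  hence "cis (2*pi * s) / cis (2*pi * s') = 1" by simp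
  hence "cis (2*pi * s - 2*pi * s') = 1" by (simp add: cis_divide)
  hence "cos (2*pi * s - 2*pi * s') = 1" by (metis Re_complex_of_real cis.sel(1) one_complex.sel(1))
  then obtain n :: int where "2*pi * s - 2*pi * s' = of_int n * 2 * pi" using cos_one_2pi_int by blast
  hence "(2 * pi) * s = (2 * pi) * (s' + of_int n)" by (simp add: algebra_simps)
  hence "s = s' + of_int n" by simp
  thus "\<exists>i::int. s = s' + of_int i" by blast
next
  assume "\<exists>i::int. s = s' + of_int i"
  then obtain i :: int where i: "s = s' + of_int i" by blast
  have "cis (2*pi * s) = cis (2*pi * s') * cis (2 * pi * of_int i)" unfolding cis_mult i by (simp add: algebra_simps)
  also have "cis (2 * pi * of_int i) = 1" by (rule cis_multiple_2pi) simp
  finally show "cis (2*pi * s) = cis (2*pi * s')" by simp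
qed

context cyc begin

lemma F_cont: "continuous_on UNIV (F c)"
proof (rule continuous_on_coordinatewise_then_product)
  fix j
  show "continuous_on UNIV (\<lambda>P. F c P j)"
    unfolding continuous_on_eq_continuous_at[OF open_UNIV]
  proof
    fix P0 :: "real \<times> real"
    define B where "B = {\<lfloor>fst P0\<rfloor> - 1..\<lfloor>fst P0\<rfloor> + 2} \<times> {\<lfloor>snd P0\<rfloor> - 1..\<lfloor>snd P0\<rfloor> + 2}"
    have fB: "finite B" unfolding B_def by simp
    have c1: "isCont (\<lambda>P. \<Sum>z\<in>{z\<in>B. lab c z = j}. hat z P) P0"
      by (intro continuous_intros hat_isCont)
    show "isCont (\<lambda>P. F c P j) P0"
    proof (rule continuous_transform_within[OF c1, of "1/2"])
      fix P assume "P \<in> UNIV" "dist P P0 < 1/2"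
      hence d: "\<bar>fst P - fst P0\<bar> < 1/2" "\<bar>snd P - snd P0\<bar> < 1/2"
        using dist_fst_le[of P P0] dist_snd_le[of P P0] by (auto simp: dist_real_def)
      have "cell P \<subseteq> B" unfolding cell_def B_def using d by (auto, linarith+)
      hence "F c P j = (\<Sum>z\<in>B. if lab c z = j then hat z P else 0)"
        by (intro F_sum fB) (use hat_supp in blast)
      thus "(\<Sum>z\<in>{z\<in>B. lab c z = j}. hat z P) = F c P j" by (simp add: sum.inter_filter fB)
    qed auto
  qed
qed

lemma Amap_cont: "continuous_on S Amap"
  unfolding Amap_def by (intro continuous_intros)

end

theorem theorem6p5:
  fixes n1 n2 n3 N :: nat
  assumes "N = n1 + n2 + n3"
    and "1 \<le> n1" and "n1 < n2" and "n2 < n3" and "n3 < N"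
    and "2 * n3 \<noteq> N"
  shows "geom_real (cyc_complex n1 n2 n3) homeomorphic
         ({..<gcd n1 (gcd n2 n3)} \<times> (sphere (0::complex) 1 \<times> sphere (0::complex) 1))"
proof -
  interpret cyc n1 n2 n3 N using assms by unfold_locales auto
  define D where "D = {..<gg} \<times> ({0..1::real} \<times> {0..1::real})"
  define f where "f = (\<lambda>x::nat \<times> (real \<times> real). (fst x, (cis (2 * pi * fst (snd x)), cis (2 * pi * snd (snd x)))))"
  define g where "g = (\<lambda>x::nat \<times> (real \<times> real). F (fst x) (Amap (snd x)))"
  define T where "T = {..<gg} \<times> (sphere (0::complex) 1 \<times> sphere (0::complex) 1)"
  have cD: "compact D" unfolding D_def
    by (intro compact_Times finite_imp_compact compact_Icc) simp
  have cf: "continuous_on D f" unfolding f_def by (intro continuous_intros)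
  have cg: "continuous_on D g"
  proof -
    have "D = (\<Union>c\<in>{..<gg}. {c} \<times> ({0..1::real} \<times> {0..1::real}))" unfolding D_def by auto
    moreover have "continuous_on (\<Union>c\<in>{..<gg}. {c} \<times> ({0..1::real} \<times> {0..1::real})) g"
    proof (rule continuous_on_closed_Union)
      fix c assume "c \<in> {..<gg}"
      show "closed ({c} \<times> ({0..1::real} \<times> {0..1::real}))" by (intro closed_Times closed_atLeastAtMost) simp
      have "continuous_on ({c} \<times> ({0..1::real} \<times> {0..1::real})) (\<lambda>x. F c (Amap (snd x)))"
        by (rule continuous_on_compose2[OF F_cont]) (auto intro!: continuous_on_compose2[OF Amap_cont] continuous_intros)
      thus "continuous_on ({c} \<times> ({0..1::real} \<times> {0..1::real})) g"
        by (rule continuous_on_eq) (auto simp: g_def)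
    qed simp
    ultimately show ?thesis by simp
  qed
  have fD: "f ` D = T"
  proof
    show "f ` D \<subseteq> T" unfolding f_def D_def T_def by auto
    show "T \<subseteq> f ` D"
    proof
      fix y assume "y \<in> T"
      then obtain c z1 z2 where y: "y = (c, (z1, z2))" "c < gg" "z1 \<in> sphere 0 1" "z2 \<in> sphere 0 1"
        unfolding T_def by auto
      obtain s1 where s1: "s1 \<in> {0..1}" "cis (2 * pi * s1) = z1" using circ[OF y(3)] by blast
      obtain s2 where s2: "s2 \<in> {0..1}" "cis (2 * pi * s2) = z2" using circ[OF y(4)] by blast
      have "(c, (s1, s2)) \<in> D" unfolding D_def using y(2) s1(1) s2(1) by auto
      moreover have "y = f (c, (s1, s2))" unfolding f_def y(1) using s1 s2 by simp
      ultimately show "y \<in> f ` D" by blast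
    qed
  qed
  have gD: "g ` D = geom_real (cyc_complex n1 n2 n3)"
  proof
    show "g ` D \<subseteq> geom_real (cyc_complex n1 n2 n3)" unfolding g_def by (rule image_subsetI) (rule F_geom)
    show "geom_real (cyc_complex n1 n2 n3) \<subseteq> g ` D"
    proof
      fix x assume "x \<in> geom_real (cyc_complex n1 n2 n3)"
      then obtain c P where cP: "c < gg" "F c P = x" using geom_surj by blast
      obtain st where st: "F c P = F c (Amap st)" "0 \<le> fst st" "fst st \<le> 1" "0 \<le> snd st" "snd st \<le> 1"
        using A_surj by blast
      have "(c, st) \<in> D" unfolding D_def using cP(1) st by (cases st) auto
      moreover have "x = g (c, st)" unfolding g_def using cP st by simp
      ultimately show "x \<in> g ` D" by blast
    qed
  qed
  have fib: "f x = f y \<longleftrightarrow> g x = g y" if "x \<in> D" "y \<in> D" for x y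
  proof -
    obtain c s t where x: "x = (c, (s, t))" by (metis prod.collapse)
    obtain c' s' t' where y: "y = (c', (s', t'))" by (metis prod.collapse)
    have c: "c < gg" "c' < gg" using that unfolding x y D_def by auto
    have "f x = f y \<longleftrightarrow> c = c' \<and> (\<exists>i::int. s = s' + of_int i) \<and> (\<exists>j::int. t = t' + of_int j)"
      unfolding f_def x y by (simp add: cis_eq_iff2)
    also have "\<dots> \<longleftrightarrow> g x = g y"
      unfolding g_def x y using F_A_eq[OF c, of "(s,t)" "(s',t')"] by auto
    finally show ?thesis .
  qed
  have "T homeomorphic geom_real (cyc_complex n1 n2 n3)"
    by (rule quotient_homeo[OF cD cf cg fD gD fib])
  thus ?thesis unfolding T_def gg_def by (rule homeomorphic_sym[THEN iffD1])
qed


end
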